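(* Let $T$ be a parity decision tree on $\{-1,1\}^n$ and let $T'$ be any refinement of $T$. Then $$\mathbf{E}_{\ell\in T}\Big(\sum_{i=1}^n\ell_i\Big)^2\le \mathbf{E}_{\ell'\in T'}\Big(\sum_{i=1}^n\ell'_i\Big)^2.$$
   Context: A parity decision tree on $\{-1,1\}^n$ is a rooted full binary tree whose internal nodes are labelled by subsets $S\subseteq[n]$, whose two outgoing edges are labelled $-1$ and $1$; an input $x$ follows from a node labelled $S$ the edge labelled $\prod_{i\in S}x_i$. A refinement of $T$ is a parity decision tree obtained from $T$ by replacing leaves with (parity decision) subtrees. Each leaf is represented as a vector $\ell\in\{-1,0,1\}^n$ with $\ell_i$ the expected value of $x_i$ over uniformly random inputs reaching that leaf; $\mathbf{E}_{\ell\in T}$ is the expectation over the leaf reached by a uniformly random input $x\in\{-1,1\}^n$. *)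

theory Defs
  imports "HOL-Library.FuncSet" Complex_Main
begin

text \<open>Parity decision trees: a leaf, or a node labelled by a set S of coordinates
  with a child for the edge labelled -1 (first) and one for the edge labelled 1 (second).\<close>
datatype pdt = Leaf | Node "nat set" pdt pdt

fun wf_pdt :: "nat \<Rightarrow> pdt \<Rightarrow> bool" where
  "wf_pdt n Leaf = True"
| "wf_pdt n (Node S l r) = (S \<subseteq> {1..n} \<and> wf_pdt n l \<and> wf_pdt n r)"

definition cube :: "nat \<Rightarrow> (nat \<Rightarrow> real) set" where
  "cube n = ({1..n} \<rightarrow>\<^sub>E {-1, 1})"

definition parity :: "nat set \<Rightarrow> (nat \<Rightarrow> real) \<Rightarrow> real" where
  "parity S x = (\<Prod>i\<in>S. x i)"

text \<open>The leaf reached by input x, encoded as the path from the root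
  (False = edge -1, True = edge 1).\<close>
fun reach :: "pdt \<Rightarrow> (nat \<Rightarrow> real) \<Rightarrow> bool list" where
  "reach Leaf x = []"
| "reach (Node S l r) x =
     (if parity S x = -1 then False # reach l x else True # reach r x)"

text \<open>T' is a refinement of T: obtained from T by replacing leaves by subtrees.\<close>
fun refines :: "pdt \<Rightarrow> pdt \<Rightarrow> bool" where
  "refines T' Leaf = True"
| "refines Leaf (Node S l r) = False"
| "refines (Node S' l' r') (Node S l r) = (S' = S \<and> refines l' l \<and> refines r' r)"

definition leaf_vec :: "nat \<Rightarrow> pdt \<Rightarrow> (nat \<Rightarrow> real) \<Rightarrow> nat \<Rightarrow> real" where
  "leaf_vec n T x i =
     (let L = {y \<in> cube n. reach T y = reach T x} in (\<Sum>y\<in>L. y i) / real (card L))"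

definition leaf_exp :: "nat \<Rightarrow> pdt \<Rightarrow> ((nat \<Rightarrow> real) \<Rightarrow> real) \<Rightarrow> real" where
  "leaf_exp n T f = (\<Sum>x\<in>cube n. f (leaf_vec n T x)) / 2 ^ n"

end

theory Submission
  imports Defs
begin

definition avg :: "'a set \<Rightarrow> ('a \<Rightarrow> 'b) \<Rightarrow> ('a \<Rightarrow> real) \<Rightarrow> 'a \<Rightarrow> real" where
  "avg C h f x = (\<Sum>y\<in>{y\<in>C. h y = h x}. f y) / real (card {y\<in>C. h y = h x})"

lemma key:
  assumes fin: "finite C" and phi: "\<And>x y. x \<in> C \<Longrightarrow> y \<in> C \<Longrightarrow> h x = h y \<Longrightarrow> \<phi> x = \<phi> y"
  shows "(\<Sum>x\<in>C. \<phi> x * avg C h f x) = (\<Sum>x\<in>C. \<phi> x * f x)"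
proof -
  define A where "A = (\<lambda>x. {y\<in>C. h y = h x})"
  define G where "G = (\<lambda>y. \<phi> y * f y / real (card (A y)))"
  have "(\<Sum>x\<in>C. \<phi> x * avg C h f x) = (\<Sum>x\<in>C. \<Sum>y\<in>C. if h y = h x then G y else 0)"
  proof (rule sum.cong[OF refl])
    fix x assume x: "x \<in> C"
    have "\<phi> x * avg C h f x = (\<Sum>y\<in>A x. \<phi> x * f y / real (card (A x)))"
      unfolding avg_def A_def by (simp only: times_divide_eq_right sum_distrib_left sum_divide_distrib)
    also have "\<dots> = (\<Sum>y\<in>A x. G y)"
    proof (rule sum.cong[OF refl])
      fix y assume y: "y \<in> A x"
      have "y \<in> C" "h y = h x" using y unfolding A_def by auto
      then have "A y = A x" "\<phi> y = \<phi> x" using x phi[of y x] unfolding A_def by auto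
      then show "\<phi> x * f y / real (card (A x)) = G y" unfolding G_def by simp
    qed
    also have "\<dots> = (\<Sum>y\<in>C. if h y = h x then G y else 0)"
      unfolding A_def using fin by (simp add: sum.inter_filter)
    finally show "\<phi> x * avg C h f x = \<dots>" .
  qed
  also have "\<dots> = (\<Sum>y\<in>C. \<Sum>x\<in>C. if h y = h x then G y else 0)"
    by (rule sum.swap)
  also have "\<dots> = (\<Sum>y\<in>C. \<phi> y * f y)"
  proof (rule sum.cong[OF refl])
    fix y assume y: "y \<in> C"
    have "(\<Sum>x\<in>C. if h y = h x then G y else 0) = (\<Sum>x\<in>C. if h x = h y then G y else 0)"
      by (intro sum.cong refl) auto
    also have "\<dots> = (\<Sum>x\<in>A y. G y)"
      unfolding A_def using fin by (rule sum.inter_filter[symmetric])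
    also have "\<dots> = real (card (A y)) * G y" by simp
    also have "\<dots> = \<phi> y * f y"
    proof -
      have "finite (A y)" "y \<in> A y" using fin y unfolding A_def by auto
      then have "card (A y) > 0" by (auto simp: card_gt_0_iff)
      then show ?thesis unfolding G_def by simp
    qed
    finally show "(\<Sum>x\<in>C. if h y = h x then G y else 0) = \<phi> y * f y" .
  qed
  finally show ?thesis .
qed

lemma avg_const:
  assumes "x \<in> C" "y \<in> C" "h x = h y"
  shows "avg C h f x = avg C h f y"
  using assms unfolding avg_def by simp

lemma refine_ineq:
  assumes fin: "finite C" and fine: "\<And>x y. x \<in> C \<Longrightarrow> y \<in> C \<Longrightarrow> h x = h y \<Longrightarrow> g x = g y"
  shows "(\<Sum>x\<in>C. (avg C g f x)^2) \<le> (\<Sum>x\<in>C. (avg C h f x)^2)"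
proof -
  have 1: "(\<Sum>x\<in>C. avg C g f x * avg C h f x) = (\<Sum>x\<in>C. avg C g f x * f x)"
    by (rule key[OF fin]) (metis avg_const fine)
  have 2: "(\<Sum>x\<in>C. avg C g f x * avg C g f x) = (\<Sum>x\<in>C. avg C g f x * f x)"
    by (rule key[OF fin]) (metis avg_const)
  have "0 \<le> (\<Sum>x\<in>C. (avg C h f x - avg C g f x)^2)" by (rule sum_nonneg) simp
  also have "\<dots> = (\<Sum>x\<in>C. (avg C h f x)^2) - 2 * (\<Sum>x\<in>C. avg C g f x * avg C h f x)
      + (\<Sum>x\<in>C. avg C g f x * avg C g f x)"
    by (simp add: power2_diff sum.distrib sum_subtractf sum_distrib_left power2_eq_square algebra_simps)
  finally show ?thesis using 1 2 by (simp add: power2_eq_square)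
qed

lemma reach_refine:
  "refines T' T \<Longrightarrow> reach T' x = reach T' y \<Longrightarrow> reach T x = reach T y"
proof (induction T' T rule: refines.induct)
  case (3 S' l' r' S l r)
  then show ?case by (auto split: if_splits)
qed auto

lemma leaf_exp_avg:
  "leaf_exp n T (\<lambda>l. (\<Sum>i=1..n. l i)^2) = (\<Sum>x\<in>cube n. (avg (cube n) (reach T) (\<lambda>y. \<Sum>i=1..n. y i) x)^2) / 2^n"
proof -
  have "(\<Sum>i=1..n. leaf_vec n T x i) = avg (cube n) (reach T) (\<lambda>y. \<Sum>i=1..n. y i) x" for x
    unfolding leaf_vec_def avg_def Let_def
    by (simp only: sum_divide_distrib[symmetric]) (simp only: sum.swap[of _ "{1..n}"])
  then show ?thesis unfolding leaf_exp_def by simp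
qed

lemma finite_cube: "finite (cube n)"
  unfolding cube_def by (rule finite_PiE) auto

theorem proposition3:
  fixes n :: nat and T T' :: pdt
  assumes "wf_pdt n T" and "wf_pdt n T'" and "refines T' T"
  shows "leaf_exp n T (\<lambda>l. (\<Sum>i=1..n. l i)^2) \<le> leaf_exp n T' (\<lambda>l. (\<Sum>i=1..n. l i)^2)"
  unfolding leaf_exp_avg
proof (rule divide_right_mono[OF refine_ineq[OF finite_cube]])
  fix x y assume "reach T' x = reach T' y"
  then show "reach T x = reach T y" by (rule reach_refine[OF assms(3)])
qed simp

end
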